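(* Let $M>2$, $p_M=\frac{M+2}{M-2}$, $m\ge2$, and for $p\in(1,p_M)$ let $v_p$ be the unique solution in $H^1_{0,M}$ of $-(t^{M-1}v')'=t^{M-1}|v|^{p-1}v$ on $(0,1)$, $v'(0)=0$, $v(1)=0$, with exactly $m$ nodal zones and $v_p(0)>0$. Fix $i\in\{1,\dots,m-1\}$ and let $w_{i,p}(r)=t_{i,p}^{2/(p-1)}v_p(t_{i,p}r)$ for $0\le r\le 1/t_{i,p}$. Assume that for a sequence $p_n\to p_M$, \[ \frac{s_{i-1,p_n}}{t_{i,p_n}}\to0\quad\text{and}\quad t_{i,p_n}\widetilde{\mathcal M}_{i-1,p_n}\to+\infty . \] Then $w_{i,p_n}\to0$ uniformly on $[1-\delta,1]$ for every $0<\delta<1$.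
   Context: $H^1_{0,M}$: measurable $v$ on $(0,1)$ with $\int_0^1t^{M-1}(v^2+|v'|^2)<\infty$, $v(1)=0$. $0=t_{0,p}<t_{1,p}<\dots<t_{m,p}=1$ are $0$ and the zeros of $v_p$; $s_{k,p}$ is the unique critical point of $v_p$ in $(t_{k,p},t_{k+1,p})$ with $s_{0,p}=0$; $\mathcal M_{k,p}=|v_p(s_{k,p})|$, $\widetilde{\mathcal M}_{k,p}=\mathcal M_{k,p}^{(p-1)/2}$. *)

theory Defs
  imports "HOL-Analysis.Analysis"
begin

text \<open>Classical radial solution of  -(t^(M-1) v')' = t^(M-1) |v|^(p-1) v  on (0,1),
  v'(0) = 0, v(1) = 0, with v in H^1_{0,M} (weighted integrability of v^2 + v'^2).\<close>
definition radial_sol :: "real \<Rightarrow> real \<Rightarrow> (real \<Rightarrow> real) \<Rightarrow> bool" where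
  "radial_sol M p v \<longleftrightarrow>
     (\<exists>v'. (\<forall>t\<in>{0..1}. (v has_real_derivative v' t) (at t within {0..1}))
        \<and> v' 0 = 0 \<and> v 1 = 0
        \<and> set_integrable lborel {0<..<1} (\<lambda>t. t powr (M - 1) * ((v t)\<^sup>2 + (v' t)\<^sup>2))
        \<and> (\<forall>t\<in>{0<..<1}. ((\<lambda>s. s powr (M - 1) * v' s) has_real_derivative
               - (t powr (M - 1) * (\<bar>v t\<bar> powr (p - 1) * v t))) (at t)))"

definition zeros01 :: "(real \<Rightarrow> real) \<Rightarrow> real set" where
  "zeros01 v = {t \<in> {0<..1}. v t = 0}"

text \<open>v has exactly m nodal zones: the zeros 0 < t_1 < ... < t_m = 1 in (0,1] are m in number,
  so the nodal zones are (t_0,t_1), ..., (t_(m-1),t_m) with t_0 = 0.\<close>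
definition nodal_zones :: "(real \<Rightarrow> real) \<Rightarrow> nat \<Rightarrow> bool" where
  "nodal_zones v m \<longleftrightarrow> finite (zeros01 v) \<and> card (zeros01 v) = m"

definition tz :: "(real \<Rightarrow> real) \<Rightarrow> nat \<Rightarrow> real" where
  "tz v k = sorted_list_of_set (insert 0 (zeros01 v)) ! k"

definition crit :: "(real \<Rightarrow> real) \<Rightarrow> nat \<Rightarrow> real" where
  "crit v k = (if k = 0 then 0
     else (THE s. tz v k < s \<and> s < tz v (Suc k) \<and> deriv v s = 0))"

definition Mtil :: "real \<Rightarrow> (real \<Rightarrow> real) \<Rightarrow> nat \<Rightarrow> real" where
  "Mtil p v k = \<bar>v (crit v k)\<bar> powr ((p - 1) / 2)"

definition wres :: "real \<Rightarrow> (real \<Rightarrow> real) \<Rightarrow> nat \<Rightarrow> real \<Rightarrow> real" where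
  "wres p v i r = tz v i powr (2 / (p - 1)) * v (tz v i * r)"

end

theory Submission
  imports Defs
begin

lemma powr_times_self: "(x::real) > 0 \<Longrightarrow> x powr a * x = x powr (a + 1)"
  by (simp add: powr_add)

lemma absG_deriv:
  fixes p x :: real
  assumes p: "p > 1"
  shows "((\<lambda>x. \<bar>x\<bar> powr (p+1)) has_real_derivative (p+1) * (\<bar>x\<bar> powr (p-1) * x)) (at x)"
proof (cases "x = 0")
  case True
  have "((\<lambda>h. (\<bar>0 + h\<bar> powr (p+1) - \<bar>0\<bar> powr (p+1)) / h) \<longlongrightarrow> 0) (at 0)"
  proof (rule Lim_null_comparison)
    show "\<forall>\<^sub>F h in at 0. norm ((\<bar>0 + h\<bar> powr (p+1) - \<bar>0\<bar> powr (p+1)) / h) \<le> \<bar>h\<bar> powr p"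
    proof (rule eventually_at_filter[THEN iffD2], rule always_eventually, intro allI impI)
      fix h :: real assume "h \<noteq> 0"
      then have "\<bar>h\<bar> powr (p+1) = \<bar>h\<bar> powr p * \<bar>h\<bar>" by (simp add: powr_add)
      then show "norm ((\<bar>0 + h\<bar> powr (p+1) - \<bar>0\<bar> powr (p+1)) / h) \<le> \<bar>h\<bar> powr p"
        using \<open>h \<noteq> 0\<close> p by (simp add: abs_mult)
    qed
    show "((\<lambda>h. \<bar>h\<bar> powr p) \<longlongrightarrow> 0) (at 0)"
      using p by (intro tendsto_zero_powrI tendsto_rabs_zero tendsto_ident_at) auto
  qed
  then show ?thesis using True p by (simp add: DERIV_def)
next
  case False
  have ev: "eventually (\<lambda>z. z \<noteq> 0) (nhds x)"
    using False by (intro t1_space_nhds) auto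
  show ?thesis
  proof (cases "x > 0")
    case True
    have "((\<lambda>z. z powr (p+1)) has_real_derivative (p+1) * x powr (p+1-1)) (at x)"
      using True by (rule has_real_derivative_powr)
    then have "((\<lambda>z. \<bar>z\<bar> powr (p+1)) has_real_derivative (p+1) * x powr (p+1-1)) (at x)"
      by (rule has_field_derivative_transform_within_open[where S="{0<..}"]) (use True in auto)
    moreover have "x powr (p+1-1) = \<bar>x\<bar> powr (p-1) * x" using True
      by (simp add: powr_times_self)
    ultimately show ?thesis by simp
  next
    case False
    with \<open>x \<noteq> 0\<close> have xn: "x < 0" by simp
    have "((\<lambda>z. (-z) powr (p+1)) has_real_derivative (p+1) * (-x) powr (p+1-1) * (-1)) (at x)"
      using xn by (auto intro!: derivative_eq_intros)
    then have "((\<lambda>z. \<bar>z\<bar> powr (p+1)) has_real_derivative (p+1) * (-x) powr (p+1-1) * (-1)) (at x)"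
      by (rule has_field_derivative_transform_within_open[where S="{..<0}"]) (use xn in auto)
    moreover have "(p+1) * (-x) powr (p+1-1) * (-1) = (p+1) * (\<bar>x\<bar> powr (p-1) * x)"
    proof -
      have "(-x) powr (p-1) * (-x) = (-x) powr (p-1+1)" using xn by (intro powr_times_self) simp
      then have e: "\<bar>x\<bar> powr (p-1) * x = - ((-x) powr p)" using xn by simp
      show ?thesis unfolding e by simp
    qed
    ultimately show ?thesis by simp
  qed
qed

lemma mvt_simple:
  fixes f f' :: "real \<Rightarrow> real"
  assumes "a < b" "continuous_on {a..b} f"
    and "\<And>x. a < x \<Longrightarrow> x < b \<Longrightarrow> (f has_real_derivative f' x) (at x)"
  shows "\<exists>z. a < z \<and> z < b \<and> f b - f a = (b - a) * f' z"
proof -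
  obtain l z where z: "a < z" "z < b" "DERIV f z :> l" "f b - f a = (b - a) * l"
    using MVT[OF assms(1,2)] assms(3) real_differentiable_def by blast
  then have "l = f' z" using assms(3) DERIV_unique by blast
  then show ?thesis using z by blast
qed

lemma cont_bound:
  fixes f :: "real \<Rightarrow> real"
  assumes "continuous_on {a..b} f"
  shows "\<exists>B>0. \<forall>x\<in>{a..b}. \<bar>f x\<bar> \<le> B"
proof -
  have "bounded (f ` {a..b})"
    by (rule compact_imp_bounded, rule compact_continuous_image[OF assms]) simp
  then show ?thesis unfolding bounded_pos by auto
qed

locale rsol =
  fixes M p :: real and v v' :: "real \<Rightarrow> real"
  assumes M2: "M > 2" and p1: "p > 1" and pM: "p < (M+2)/(M-2)"
  and vd: "\<forall>t\<in>{0..1}. (v has_real_derivative v' t) (at t within {0..1})"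
  and gd: "\<forall>t\<in>{0<..<1}. ((\<lambda>s. s powr (M-1) * v' s) has_real_derivative
               - (t powr (M - 1) * (\<bar>v t\<bar> powr (p - 1) * v t))) (at t)"
begin

definition "ka = 2/(p-1)"
definition "al = 2*ka + 2 - M"
definition "bb = ka*(M-2-ka)"
definition "ff x = \<bar>x\<bar> powr (p-1) * x"
definition "g r = r powr (M-1) * v' r"
definition "y r = r powr ka * v r"
definition "ph r = ka * y r + r powr (ka+2-M) * g r"
definition "H r = (ph r)^2/2 - bb*(y r)^2/2 + \<bar>y r\<bar> powr (p+1)/(p+1)"

lemma ka_pos: "ka > 0" using p1 by (simp add: ka_def)
lemma ka_p: "ka * (p-1) = 2"
proof -
  have "p - 1 \<noteq> 0" using p1 by simp
  then show ?thesis by (simp add: ka_def field_simps)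
qed
lemma al_pos: "al > 0"
proof -
  have "p - 1 < 4/(M-2)" using pM M2 by (simp add: field_simps)
  then have "4/(p-1) > M - 2" using p1 M2 by (simp add: field_simps)
  then show ?thesis by (simp add: al_def ka_def)
qed

lemma vc: "continuous_on {0..1} v"
  using vd by (intro DERIV_continuous_on) auto

lemma ffc: "continuous_on {0..1} (\<lambda>t. ff (v t))"
proof -
  have "continuous_on {0..1} (\<lambda>t. \<bar>v t\<bar> powr (p-1))"
    by (rule continuous_on_powr'[OF continuous_on_rabs[OF vc] continuous_on_const]) (use p1 in auto)
  then show ?thesis unfolding ff_def by (rule continuous_on_mult[OF _ vc])
qed

lemma vd_at: "t \<in> {0<..<1} \<Longrightarrow> (v has_real_derivative v' t) (at t)"
proof -
  assume t: "t \<in> {0<..<1}"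
  have "(v has_real_derivative v' t) (at t within {0..1})" using vd t by auto
  then show ?thesis using at_within_Icc_at[of 0 t 1] t by simp
qed

lemma gd': "t \<in> {0<..<1} \<Longrightarrow> (g has_real_derivative - (t powr (M - 1) * ff (v t))) (at t)"
  using gd unfolding g_def ff_def by auto

lemma gc: "continuous_on {a..b} g" if "0 < a" "b < 1"
proof (rule DERIV_continuous_on)
  fix x assume x: "x \<in> {a..b}"
  have "x \<in> {0<..<1}" using x that by auto
  then have D: "(g has_real_derivative - (x powr (M - 1) * ff (v x))) (at x)" by (rule gd')
  show "(g has_real_derivative - (x powr (M - 1) * ff (v x))) (at x within {a..b})"
    by (rule has_field_derivative_at_within[OF D])
qed

lemma vprime_bound: "\<exists>K\<ge>0. \<forall>r\<in>{0<..<1}. \<bar>v' r\<bar> \<le> K * r"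
proof -
  obtain Kf where Kf: "Kf > 0" "\<forall>x\<in>{0..1}. \<bar>ff (v x)\<bar> \<le> Kf"
    using cont_bound[OF ffc] by blast
  obtain Bv where Bv: "Bv > 0" "\<forall>x\<in>{0..1}. \<bar>v x\<bar> \<le> Bv"
    using cont_bound[OF vc] by blast
  have gbound: "\<bar>g r\<bar> \<le> Kf * r powr M" if r: "r \<in> {0<..<1}" for r
  proof -
    have step: "\<bar>g r\<bar> \<le> Kf * r powr M + 2 * Bv * \<rho> powr (M-2)" if rho: "0 < \<rho>" "\<rho> < r" for \<rho>
    proof -
      have c1: "continuous_on {0..\<rho>} v" by (rule continuous_on_subset[OF vc]) (use rho r in auto)
      obtain \<xi> where xi: "0 < \<xi>" "\<xi> < \<rho>" "v \<rho> - v 0 = (\<rho> - 0) * v' \<xi>"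
        using mvt_simple[OF rho(1) c1, of v'] vd_at rho r by force
      have "\<bar>v \<rho>\<bar> \<le> Bv" "\<bar>v 0\<bar> \<le> Bv" using Bv rho r by auto
      moreover have "\<rho> * v' \<xi> = v \<rho> - v 0" using xi(3) by simp
      moreover have "\<bar>v \<rho> - v 0\<bar> \<le> \<bar>v \<rho>\<bar> + \<bar>v 0\<bar>" by (rule abs_triangle_ineq4)
      ultimately have "\<bar>\<rho> * v' \<xi>\<bar> \<le> 2 * Bv" by linarith
      then have vx: "\<bar>v' \<xi>\<bar> \<le> 2 * Bv / \<rho>" using rho by (simp add: field_simps abs_mult)
      have "\<bar>g \<xi>\<bar> = \<xi> powr (M-1) * \<bar>v' \<xi>\<bar>" using xi by (simp add: g_def abs_mult)
      also have "... \<le> \<rho> powr (M-1) * (2 * Bv / \<rho>)"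
      proof (rule mult_mono)
        show "\<xi> powr (M-1) \<le> \<rho> powr (M-1)" using xi M2 by (intro powr_mono2) auto
      qed (use vx in auto)
      also have "... = 2 * Bv * \<rho> powr (M-2)"
      proof -
        have "\<rho> powr (M-1) = \<rho> powr (M-2) * \<rho>" using rho powr_times_self[of \<rho> "M-2"] by simp
        then show ?thesis using rho by simp
      qed
      finally have g1: "\<bar>g \<xi>\<bar> \<le> 2 * Bv * \<rho> powr (M-2)" .
      have c2: "continuous_on {\<xi>..r} g" using gc xi r by auto
      obtain z where z: "\<xi> < z" "z < r" "g r - g \<xi> = (r - \<xi>) * (- (z powr (M - 1) * ff (v z)))"
        using mvt_simple[OF _ c2, of "\<lambda>z. - (z powr (M - 1) * ff (v z))"] gd' xi rho r by force
      have "\<bar>g r - g \<xi>\<bar> = (r - \<xi>) * (z powr (M - 1) * \<bar>ff (v z)\<bar>)"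
        using z xi by (simp add: abs_mult)
      also have "... \<le> r * (r powr (M-1) * Kf)"
      proof (rule mult_mono)
        have "z powr (M-1) \<le> r powr (M-1)" using z xi M2 by (intro powr_mono2) auto
        moreover have "\<bar>ff (v z)\<bar> \<le> Kf" using Kf(2) z xi r by auto
        ultimately show "z powr (M - 1) * \<bar>ff (v z)\<bar> \<le> r powr (M-1) * Kf"
          by (intro mult_mono) auto
      qed (use xi r in auto)
      also have "... = Kf * r powr M"
      proof -
        have "r powr (M-1) * r = r powr M" using r powr_times_self[of r "M-1"] by simp
        then show ?thesis by (simp add: algebra_simps)
      qed
      finally show ?thesis using g1 by linarith
    qed
    show ?thesis
    proof (rule ccontr)
      assume "\<not> ?thesis"
      then have eps: "\<bar>g r\<bar> - Kf * r powr M > 0" by simp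
      have "((\<lambda>\<rho>. 2 * Bv * \<rho> powr (M-2)) \<longlongrightarrow> 2 * Bv * 0) (at_right 0)"
      proof (intro tendsto_mult tendsto_const tendsto_zero_powrI)
        show "((\<lambda>x. x) \<longlongrightarrow> (0::real)) (at_right 0)" by (rule tendsto_ident_at)
        show "\<forall>\<^sub>F x in at_right 0. 0 \<le> (x::real)" using eventually_at_right_less[of "0::real"] by (rule eventually_mono) simp
      qed (use M2 in auto)
      then have "\<forall>\<^sub>F \<rho> in at_right 0. 2 * Bv * \<rho> powr (M-2) < \<bar>g r\<bar> - Kf * r powr M"
        using eps by (simp add: order_tendsto_iff)
      moreover have "\<forall>\<^sub>F \<rho> in at_right 0. 0 < \<rho> \<and> \<rho> < (r::real)"
        using r by (intro eventually_at_rightI[of 0 r]) auto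
      ultimately have EV: "\<forall>\<^sub>F \<rho> in at_right 0. 2 * Bv * \<rho> powr (M-2) < \<bar>g r\<bar> - Kf * r powr M \<and> 0 < \<rho> \<and> \<rho> < r"
        by eventually_elim auto
      then obtain \<rho> where "2 * Bv * \<rho> powr (M-2) < \<bar>g r\<bar> - Kf * r powr M" "0 < \<rho>" "\<rho> < r"
      proof -
        have nb: "at_right (0::real) \<noteq> bot" using trivial_limit_at_right_real[of 0] by simp
        show ?thesis using eventually_happens'[OF nb] that EV by blast
      qed
      with step[of \<rho>] show False by linarith
    qed
  qed
  have "\<bar>v' r\<bar> \<le> Kf * r" if r: "r \<in> {0<..<1}" for r
  proof -
    have "r powr (M-1) * \<bar>v' r\<bar> \<le> Kf * r powr M" using gbound[OF r] r by (simp add: g_def abs_mult)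
    also have "... = (r powr (M-1)) * (Kf * r)"
      using r powr_times_self[of r "M-1"] by simp
    finally show ?thesis using r by simp
  qed
  then show ?thesis using Kf by (intro exI[of _ Kf]) auto
qed

lemma ff_y: "r > 0 \<Longrightarrow> ff (y r) = r powr (ka+2) * ff (v r)"
proof -
  assume r: "r > 0"
  have "\<bar>y r\<bar> powr (p-1) = r powr (ka*(p-1)) * \<bar>v r\<bar> powr (p-1)"
    using r by (simp add: y_def abs_mult powr_mult powr_powr)
  also have "... = r powr 2 * \<bar>v r\<bar> powr (p-1)" using ka_p by simp
  finally show ?thesis using r by (simp add: ff_def y_def powr_add)
qed

lemma y_deriv: "r \<in> {0<..<1} \<Longrightarrow> (y has_real_derivative ph r / r) (at r)"
proof -
  assume r: "r \<in> {0<..<1}"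
  have "(y has_real_derivative ka * r powr (ka - 1) * v r + r powr ka * v' r) (at r)"
    unfolding y_def using r vd_at[OF r] by (auto intro!: derivative_eq_intros)
  moreover have "ka * r powr (ka - 1) * v r + r powr ka * v' r = ph r / r"
  proof -
    have "r powr (ka+2-M) * g r = r powr (ka + 1) * v' r"
      using r by (simp add: g_def powr_add[symmetric] mult.assoc[symmetric])
    moreover have "r powr (ka - 1) = r powr ka / r" using r by (simp add: powr_diff)
    moreover have "r powr (ka + 1) = r powr ka * r" using r by (simp add: powr_add)
    ultimately show ?thesis using r by (simp add: ph_def y_def field_simps)
  qed
  ultimately show ?thesis by simp
qed

lemma ph_deriv: "r \<in> {0<..<1} \<Longrightarrow>
   (ph has_real_derivative (al * ph r + bb * y r - ff (y r)) / r) (at r)"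
proof -
  assume r: "r \<in> {0<..<1}"
  define c where "c = ka + 2 - M"
  have "(ph has_real_derivative ka * (ph r / r) + (c * r powr (c - 1) * g r
        + r powr c * (- (r powr (M - 1) * ff (v r))))) (at r)"
  proof -
    have e: "ph = (\<lambda>r. ka * y r + r powr c * g r)" by (simp add: ph_def c_def fun_eq_iff)
    have D: "((\<lambda>r. ka * y r + r powr c * g r) has_real_derivative ka * (ph r / r) + (c * r powr (c - 1) * g r
        + r powr c * (- (r powr (M - 1) * ff (v r))))) (at r)"
      using r y_deriv[OF r] gd'[OF r]
      by (auto intro!: derivative_eq_intros)
    from D show ?thesis by (simp only: e[symmetric])
  qed
  moreover have "ka * (ph r / r) + (c * r powr (c - 1) * g r
        + r powr c * (- (r powr (M - 1) * ff (v r)))) = (al * ph r + bb * y r - ff (y r)) / r"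
  proof -
    have X: "r powr c * g r = ph r - ka * y r" by (simp add: ph_def c_def)
    have P1: "r powr (c - 1) = r powr c / r" using r by (simp add: powr_diff)
    have P2: "r powr c * r powr (M - 1) = r powr (ka+2) / r"
    proof -
      have "r powr c * r powr (M - 1) = r powr (ka + 1)" using r by (simp add: powr_add[symmetric] c_def)
      moreover have "r powr (ka + 1) * r = r powr (ka+2)" using r powr_times_self[of r "ka+1"] by (simp add: add.commute)
      ultimately show ?thesis using r by (simp add: field_simps)
    qed
    have "ka * (ph r / r) + (c * r powr (c - 1) * g r
        + r powr c * (- (r powr (M - 1) * ff (v r))))
        = (ka * ph r + c * (r powr c * g r) - (r powr c * r powr (M - 1)) * ff (v r) * r) / r"
      using r unfolding P1 by (simp add: field_simps)
    also have "... = (ka * ph r + c * (ph r - ka * y r) - ff (y r)) / r"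
      unfolding X P2 using r ff_y[of r] by simp
    also have "... = (al * ph r + bb * y r - ff (y r)) / r"
      by (simp add: al_def bb_def c_def algebra_simps)
    finally show ?thesis .
  qed
  ultimately show ?thesis by simp
qed

lemma H_deriv: "r \<in> {0<..<1} \<Longrightarrow> (H has_real_derivative al * (ph r)^2 / r) (at r)"
proof -
  assume r: "r \<in> {0<..<1}"
  have pp: "p + 1 \<noteq> 0" using p1 by simp
  define GG where "GG = (\<lambda>r. \<bar>y r\<bar> powr (p+1) / (p+1))"
  have G: "(GG has_real_derivative ff (y r) * (ph r / r)) (at r)"
    using DERIV_cdivide[OF DERIV_chain2[OF absG_deriv[OF p1] y_deriv[OF r]], of "p+1"] pp
    unfolding GG_def by (simp add: ff_def mult.assoc)
  have e: "H = (\<lambda>r. (ph r)^2/2 - bb*(y r)^2/2 + GG r)"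
    by (simp add: H_def GG_def fun_eq_iff)
  have "r \<noteq> 0" using r by auto
  then show ?thesis
    unfolding e using ph_deriv[OF r] y_deriv[OF r] G
    by (auto intro!: derivative_eq_intros simp: field_simps power2_eq_square)
qed

lemma y0: "y 0 = 0" by (simp add: y_def)
lemma ph0: "ph 0 = 0" by (simp add: ph_def y_def)
lemma H0: "H 0 = 0" using p1 by (simp add: H_def ph_def y_def)

lemma ph_alt: "r > 0 \<Longrightarrow> ph r = ka * y r + r powr (ka + 1) * v' r"
proof -
  assume r: "r > 0"
  have "r powr (ka+2-M) * g r = r powr (ka + 1) * v' r"
    using r by (simp add: g_def powr_add[symmetric] mult.assoc[symmetric])
  then show ?thesis by (simp add: ph_def)
qed

lemma yc: "continuous_on {0..1} y"
proof -
  have "continuous_on {0..1} (\<lambda>r::real. r powr ka)"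
    by (rule continuous_on_powr'[OF continuous_on_id continuous_on_const]) (use ka_pos in auto)
  then show ?thesis unfolding y_def by (rule continuous_on_mult[OF _ vc])
qed

lemma phc: "continuous_on {0..<1} ph"
  unfolding continuous_on_eq_continuous_within
proof
  fix x :: real assume x: "x \<in> {0..<1}"
  show "continuous (at x within {0..<1}) ph"
  proof (cases "x = 0")
    case False
    then have "x \<in> {0<..<1}" using x by auto
    then have "isCont ph x" using ph_deriv by (blast intro: DERIV_isCont)
    then show ?thesis by (rule continuous_at_imp_continuous_within)
  next
    case True
    obtain K where K: "K \<ge> 0" "\<forall>r\<in>{0<..<1}. \<bar>v' r\<bar> \<le> K * r" using vprime_bound by blast
    have "(ph \<longlongrightarrow> 0) (at 0 within {0..<1})"
    proof (rule Lim_null_comparison)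
      show "\<forall>\<^sub>F r in at 0 within {0..<1}. norm (ph r) \<le> ka * \<bar>y r\<bar> + K * r powr (ka + 2)"
      proof (rule eventually_at_filter[THEN iffD2], rule always_eventually, intro allI impI)
        fix r :: real assume r: "r \<noteq> 0" "r \<in> {0..<1}"
        then have r0: "r \<in> {0<..<1}" by auto
        have "\<bar>r powr (ka + 1) * v' r\<bar> \<le> r powr (ka+1) * (K * r)"
          using K r0 by (simp add: abs_mult mult_left_mono)
        also have "... = K * r powr (ka + 2)"
          using r0 powr_times_self[of r "ka+1"] by (simp add: algebra_simps)
        finally have "\<bar>r powr (ka + 1) * v' r\<bar> \<le> K * r powr (ka + 2)" .
        then show "norm (ph r) \<le> ka * \<bar>y r\<bar> + K * r powr (ka + 2)"
          using ph_alt[of r] r0 ka_pos abs_triangle_ineq[of "ka * y r" "r powr (ka + 1) * v' r"]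
          by (simp add: abs_mult)
      qed
      have yt: "(y \<longlongrightarrow> 0) (at 0 within {0..<1})"
      proof -
        have "continuous_on {0..<1} y" by (rule continuous_on_subset[OF yc]) auto
        then have "(y \<longlongrightarrow> y 0) (at 0 within {0..<1})"
          by (simp add: continuous_on_def)
        then show ?thesis by (simp add: y0)
      qed
      have rt: "((\<lambda>r::real. r powr (ka+2)) \<longlongrightarrow> 0) (at 0 within {0..<1})"
      proof (rule tendsto_zero_powrI[where b="ka+2"])
        show "((\<lambda>r::real. r) \<longlongrightarrow> 0) (at 0 within {0..<1})" by (rule tendsto_ident_at)
        show "\<forall>\<^sub>F r in at 0 within {0..<1}. 0 \<le> (r::real)"
          by (rule eventually_at_filter[THEN iffD2], rule always_eventually) auto
      qed (use ka_pos in auto)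
      have "((\<lambda>r. ka * \<bar>y r\<bar> + K * r powr (ka + 2)) \<longlongrightarrow> ka * \<bar>0\<bar> + K * 0) (at 0 within {0..<1})"
        by (intro tendsto_add tendsto_mult tendsto_const tendsto_rabs yt rt)
      then show "((\<lambda>r. ka * \<bar>y r\<bar> + K * r powr (ka + 2)) \<longlongrightarrow> 0) (at 0 within {0..<1})" by simp
    qed
    then show ?thesis using True ph0 by (simp add: continuous_within)
  qed
qed

lemma Hc: "continuous_on {0..<1} H"
proof -
  have yc': "continuous_on {0..<1} y" by (rule continuous_on_subset[OF yc]) auto
  have "continuous_on {0..<1} (\<lambda>r. \<bar>y r\<bar> powr (p+1))"
    by (rule continuous_on_powr'[OF continuous_on_rabs[OF yc'] continuous_on_const]) (use p1 in auto)
  then show ?thesis unfolding H_def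
    by (intro continuous_on_add continuous_on_diff continuous_on_divide continuous_on_mult
        continuous_on_power phc yc' continuous_on_const) (use p1 in auto)
qed

lemma H_mono: assumes "0 \<le> a" "a \<le> b" "b < 1" shows "H a \<le> H b"
proof (rule DERIV_nonneg_imp_increasing_open[OF assms(2)])
  fix x assume "a < x" "x < b"
  then have x: "x \<in> {0<..<1}" using assms by auto
  show "\<exists>z. (H has_real_derivative z) (at x) \<and> 0 \<le> z"
    using H_deriv[OF x] al_pos x by (intro exI[of _ "al * (ph x)^2 / x"]) auto
next
  show "continuous_on {a..b} H" using assms by (intro continuous_on_subset[OF Hc]) auto
qed

lemma H_nonneg: "0 \<le> r \<Longrightarrow> r < 1 \<Longrightarrow> H r \<ge> 0"
  using H_mono[of 0 r] H0 by simp

lemma ycs: "0 \<le> a \<Longrightarrow> b \<le> 1 \<Longrightarrow> continuous_on {a..b} y"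
  by (rule continuous_on_subset[OF yc]) auto

lemma crit_neg:
  assumes e: "e \<in> {0<..<1}" and z: "ph e = 0" and pos: "y e > 0"
  shows "(al * ph e + bb * y e - ff (y e)) / e < 0"
proof -
  define u where "u = y e powr (p-1)"
  have u: "u > 0" using pos by (simp add: u_def)
  have ffy: "ff (y e) = u * y e" using pos by (simp add: ff_def u_def)
  have py: "\<bar>y e\<bar> powr (p+1) = u * (y e)^2"
  proof -
    have "y e powr (p - 1 + 2) = y e powr (p-1) * y e powr 2" by (rule powr_add)
    then show ?thesis using pos by (simp add: u_def power2_eq_square add.commute)
  qed
  have "H e \<ge> 0" using H_nonneg e by auto
  then have h: "- bb * (y e)^2 / 2 + u * (y e)^2 / (p+1) \<ge> 0"
    by (simp add: H_def z py)
  have "bb * y e < u * y e"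
  proof (cases "bb \<le> 0")
    case True
    then show ?thesis using u pos by (smt (verit) mult_nonneg_nonneg mult_nonpos_nonneg mult_pos_pos)
  next
    case False
    have y2: "(y e)^2 > 0" using pos by simp
    from h have "(y e)^2 * (u/(p+1) - bb/2) \<ge> 0" by (simp add: algebra_simps)
    then have "u / (p+1) - bb / 2 \<ge> 0" using y2 by (simp add: zero_le_mult_iff)
    then have "u / (p+1) \<ge> bb / 2" by simp
    then have "u \<ge> bb * (p+1) / 2" using p1 by (simp add: field_simps)
    moreover have "bb * (p+1) / 2 > bb" using False p1 by (simp add: field_simps)
    ultimately have "u > bb" by linarith
    then show ?thesis using pos by simp
  qed
  then show ?thesis using e z ffy by (simp add: divide_neg_pos)
qed

lemma y_dec_after:
  assumes "d \<in> {0<..<1}" "ph d < 0" "d < c"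
  shows "\<exists>h. d < h \<and> h \<le> c \<and> y h < y d"
proof -
  have "ph d / d < 0" using assms by (simp add: divide_neg_pos)
  from DERIV_neg_dec_right[OF y_deriv[OF assms(1)] this]
  obtain \<delta> where dl: "\<delta> > 0" "\<forall>h>0. h < \<delta> \<longrightarrow> y d > y (d + h)" by blast
  define h where "h = min (\<delta>/2) ((c - d)/2)"
  have h: "0 < h" "h < \<delta>" "d + h \<le> c" using dl assms(3) by (auto simp: h_def min_def field_simps)
  then show ?thesis using dl(2)[rule_format, of h] by (intro exI[of _ "d + h"]) auto
qed

lemma y_inc_before:
  assumes "d \<in> {0<..<1}" "ph d > 0" "c < d"
  shows "\<exists>h. c \<le> h \<and> h < d \<and> y h < y d"
proof -
  have "ph d / d > 0" using assms by simp
  from DERIV_pos_inc_left[OF y_deriv[OF assms(1)] this]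
  obtain \<delta> where dl: "\<delta> > 0" "\<forall>h>0. h < \<delta> \<longrightarrow> y (d - h) < y d" by blast
  define h where "h = min (\<delta>/2) ((d - c)/2)"
  have h: "0 < h" "h < \<delta>" "c \<le> d - h" using dl assms(3) by (auto simp: h_def min_def field_simps)
  then show ?thesis using dl(2)[rule_format, of h] by (intro exI[of _ "d - h"]) auto
qed

lemma no_interior_min:
  assumes "0 < l" "l < e" "e < rr" "rr < 1" "y e > 0"
    and mn: "\<forall>z\<in>{l..rr}. y e \<le> y z"
  shows False
proof -
  have e: "e \<in> {0<..<1}" using assms by auto
  have "ph e / e = 0"
  proof (rule DERIV_local_min[OF y_deriv[OF e]])
    show "0 < min (e - l) (rr - e)" using assms by auto
    show "\<forall>z. \<bar>e - z\<bar> < min (e - l) (rr - e) \<longrightarrow> y e \<le> y z"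
      using mn by (auto simp: abs_if)
  qed
  then have z: "ph e = 0" using e by simp
  from DERIV_neg_dec_right[OF ph_deriv[OF e] crit_neg[OF e z assms(5)]]
  obtain \<delta> where dl: "\<delta> > 0" "\<forall>h>0. h < \<delta> \<longrightarrow> ph e > ph (e + h)" by blast
  define h where "h = min (\<delta>/2) ((rr - e)/2)"
  have h: "0 < h" "h < \<delta>" "e + h < rr" using dl assms by (auto simp: h_def min_def field_simps)
  have cont: "continuous_on {e..e+h} y" using ycs assms h by auto
  obtain w where w: "e < w" "w < e + h" "y (e + h) - y e = (e + h - e) * (ph w / w)"
    using mvt_simple[OF _ cont, of "\<lambda>w. ph w / w"] h y_deriv assms by force
  have "ph w < 0" using dl(2)[rule_format, of "w - e"] w h z by auto
  then have "ph w / w < 0" using w assms by (simp add: divide_neg_pos)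
  then have "y (e + h) < y e" using w h by (smt (verit) mult_pos_neg)
  moreover have "y e \<le> y (e + h)" using mn h assms by auto
  ultimately show False by simp
qed

lemma zone_pos:
  assumes a: "0 \<le> a" "a < c'" "c' < 1" and ya: "y a = 0" and yc': "y c' = 0"
    and posz: "\<forall>r\<in>{a<..<c'}. y r > 0"
    and S: "\<forall>r\<in>{a..c'}. \<bar>ph r\<bar> \<le> S" and Y: "\<forall>r\<in>{a..c'}. \<bar>y r\<bar> \<le> Y"
  shows "H c' - H a \<le> 2 * al * S * Y"
proof -
  obtain c where c: "c \<in> {a..c'}" "\<forall>z\<in>{a..c'}. y z \<le> y c"
    using continuous_attains_sup[of "{a..c'}" y] ycs[of a c'] a by auto
  have "y ((a + c')/2) > 0" using posz a by auto
  moreover have "(a + c')/2 \<in> {a..c'}" using a by auto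
  ultimately have ycpos: "y c > 0" using c(2) by fastforce
  then have c2: "a < c" "c < c'" using c ya yc' by (auto simp: order.order_iff_strict)
  have cl1: "ph d \<ge> 0" if d: "d \<in> {a<..<c}" for d
  proof (rule ccontr)
    assume "\<not> ph d \<ge> 0"
    then have neg: "ph d < 0" by simp
    have d01: "d \<in> {0<..<1}" using d a c2 by auto
    obtain h where h: "d < h" "h \<le> c" "y h < y d" using y_dec_after[OF d01 neg] d by auto
    obtain e where e: "e \<in> {d..c}" "\<forall>z\<in>{d..c}. y e \<le> y z"
      using continuous_attains_inf[of "{d..c}" y] ycs[of d c] d a c2 by auto
    have "y e \<le> y h" using e h by auto
    have "e \<noteq> d"
    proof
      assume "e = d"
      then have "y d \<le> y h" using e h by auto
      then show False using h by simp
    qed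
    moreover have "e \<noteq> c"
    proof
      assume "e = c"
      then have "y c \<le> y h" using e h by auto
      moreover have "y d \<le> y c" using c d c2 by auto
      ultimately show False using h by simp
    qed
    ultimately have "d < e" "e < c" using e by auto
    moreover have "y e > 0" using posz \<open>d < e\<close> \<open>e < c\<close> d c2 by auto
    ultimately show False using no_interior_min[of d e c] e d a c2 by auto
  qed
  have cl2: "ph d \<le> 0" if d: "d \<in> {c<..<c'}" for d
  proof (rule ccontr)
    assume "\<not> ph d \<le> 0"
    then have ps: "ph d > 0" by simp
    have d01: "d \<in> {0<..<1}" using d a c2 by auto
    obtain h where h: "c \<le> h" "h < d" "y h < y d" using y_inc_before[OF d01 ps] d by auto
    obtain e where e: "e \<in> {c..d}" "\<forall>z\<in>{c..d}. y e \<le> y z"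
      using continuous_attains_inf[of "{c..d}" y] ycs[of c d] d a c2 by auto
    have "e \<noteq> d"
    proof
      assume "e = d"
      then have "y d \<le> y h" using e h by auto
      then show False using h by simp
    qed
    moreover have "e \<noteq> c"
    proof
      assume "e = c"
      then have "y c \<le> y h" using e h by auto
      moreover have "y d \<le> y c" using c d c2 by auto
      ultimately show False using h by simp
    qed
    ultimately have "c < e" "e < d" using e by auto
    moreover have "y e > 0" using posz \<open>c < e\<close> \<open>e < d\<close> d c2 by auto
    ultimately show False using no_interior_min[of c e d] e d a c2 by auto
  qed
  have S0: "S \<ge> 0" using S a by (meson abs_ge_zero atLeastAtMost_iff less_imp_le order_trans order_refl)
  have q1: "H c - al * S * y c \<le> H a - al * S * y a"
  proof (rule DERIV_nonpos_imp_decreasing_open[of a c "\<lambda>r. H r - al * S * y r"])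
    show "a \<le> c" using c2 by simp
    fix x assume x: "a < x" "x < c"
    then have x01: "x \<in> {0<..<1}" using a c2 by auto
    have D: "((\<lambda>r. H r - al * S * y r) has_real_derivative al * (ph x)^2 / x - al * S * (ph x / x)) (at x)"
      by (intro DERIV_diff DERIV_add DERIV_cmult H_deriv[OF x01] y_deriv[OF x01])
    have "\<bar>ph x\<bar> \<le> S" using S x c2 by auto
    then have "0 \<le> ph x" "ph x \<le> S" using cl1[of x] x c2 by auto
    then have "al * (ph x)^2 / x - al * S * (ph x / x) = al * ph x * (ph x - S) / x"
      using x01 by (auto simp: field_simps power2_eq_square)
    moreover have "al * ph x * (ph x - S) / x \<le> 0"
      using \<open>0 \<le> ph x\<close> \<open>ph x \<le> S\<close> al_pos x01
      by (intro divide_nonpos_pos mult_nonneg_nonpos) auto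
    ultimately show "\<exists>z. ((\<lambda>r. H r - al * S * y r) has_real_derivative z) (at x) \<and> z \<le> 0"
      using D by auto
  next
    show "continuous_on {a..c} (\<lambda>r. H r - al * S * y r)"
      using a c2 by (intro continuous_on_diff continuous_on_mult continuous_on_const
          continuous_on_subset[OF Hc] ycs) auto
  qed
  have q2: "H c' + al * S * y c' \<le> H c + al * S * y c"
  proof (rule DERIV_nonpos_imp_decreasing_open[of c c' "\<lambda>r. H r + al * S * y r"])
    show "c \<le> c'" using c2 by simp
    fix x assume x: "c < x" "x < c'"
    then have x01: "x \<in> {0<..<1}" using a c2 by auto
    have D: "((\<lambda>r. H r + al * S * y r) has_real_derivative al * (ph x)^2 / x + al * S * (ph x / x)) (at x)"
      by (intro DERIV_diff DERIV_add DERIV_cmult H_deriv[OF x01] y_deriv[OF x01])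
    have "\<bar>ph x\<bar> \<le> S" using S x c2 a by auto
    then have "ph x \<le> 0" "- S \<le> ph x" using cl2[of x] x c2 by auto
    then have "al * (ph x)^2 / x + al * S * (ph x / x) = al * (- ph x) * (- ph x - S) / x"
      using x01 by (auto simp: field_simps power2_eq_square)
    moreover have "al * (- ph x) * (- ph x - S) / x \<le> 0"
    proof -
      have "al * (- ph x) \<ge> 0" using \<open>ph x \<le> 0\<close> al_pos by (intro mult_nonneg_nonneg) auto
      moreover have "- ph x - S \<le> 0" using \<open>- S \<le> ph x\<close> by simp
      ultimately show ?thesis using x01 by (intro divide_nonpos_pos mult_nonneg_nonpos) auto
    qed
    ultimately show "\<exists>z. ((\<lambda>r. H r + al * S * y r) has_real_derivative z) (at x) \<and> z \<le> 0"
      using D by auto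
  next
    show "continuous_on {c..c'} (\<lambda>r. H r + al * S * y r)"
      using a c2 by (intro continuous_on_add continuous_on_mult continuous_on_const
          continuous_on_subset[OF Hc] ycs) auto
  qed
  have "\<bar>y c\<bar> \<le> Y" using Y c by auto
  then have "y c \<le> Y" by simp
  then have "al * S * y c \<le> al * S * Y" using al_pos S0 by (intro mult_left_mono) auto
  moreover have "al * S * y a = 0" "al * S * y c' = 0" by (simp_all add: ya yc')
  moreover have "2 * al * S * Y = 2 * (al * S * Y)" by simp
  ultimately show ?thesis using q1 q2 by linarith
qed

lemma neg_rsol: "rsol M p (\<lambda>t. - v t) (\<lambda>t. - v' t)"
proof
  show "M > 2" "p > 1" "p < (M+2)/(M-2)" using M2 p1 pM by auto
  show "\<forall>t\<in>{0..1}. ((\<lambda>t. - v t) has_real_derivative - v' t) (at t within {0..1})"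
  proof
    fix t :: real assume "t \<in> {0..1}"
    then have "(v has_real_derivative v' t) (at t within {0..1})" using vd by blast
    then show "((\<lambda>t. - v t) has_real_derivative - v' t) (at t within {0..1})" by (rule DERIV_minus)
  qed
  show "\<forall>t\<in>{0<..<1}. ((\<lambda>s. s powr (M - 1) * - v' s) has_real_derivative
          - (t powr (M - 1) * (\<bar>- v t\<bar> powr (p - 1) * - v t))) (at t)"
  proof
    fix t :: real assume t: "t \<in> {0<..<1}"
    have D: "((\<lambda>s. s powr (M - 1) * v' s) has_real_derivative
          - (t powr (M - 1) * (\<bar>v t\<bar> powr (p - 1) * v t))) (at t)"
      using gd t by blast
    have "((\<lambda>s. - (s powr (M - 1) * v' s)) has_real_derivative
          - (- (t powr (M - 1) * (\<bar>v t\<bar> powr (p - 1) * v t)))) (at t)"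
      by (rule DERIV_minus[OF D])
    then show "((\<lambda>s. s powr (M - 1) * - v' s) has_real_derivative
          - (t powr (M - 1) * (\<bar>- v t\<bar> powr (p - 1) * - v t))) (at t)"
      by simp
  qed
qed

lemma zone_neg:
  assumes a: "0 \<le> a" "a < c'" "c' < 1" and ya: "y a = 0" and yc': "y c' = 0"
    and negz: "\<forall>r\<in>{a<..<c'}. y r < 0"
    and S: "\<forall>r\<in>{a..c'}. \<bar>ph r\<bar> \<le> S" and Y: "\<forall>r\<in>{a..c'}. \<bar>y r\<bar> \<le> Y"
  shows "H c' - H a \<le> 2 * al * S * Y"
proof -
  interpret N: rsol M p "\<lambda>t. - v t" "\<lambda>t. - v' t" by (rule neg_rsol)
  have yN: "N.y r = - y r" for r unfolding N.y_def y_def by simp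
  have phN: "N.ph r = - ph r" for r unfolding N.ph_def ph_def N.g_def g_def yN by simp
  have HN: "N.H r = H r" for r unfolding N.H_def H_def yN phN by simp
  have "N.y a = 0" "N.y c' = 0" using ya yc' by (simp_all add: yN)
  moreover have "\<forall>r\<in>{a<..<c'}. N.y r > 0" using negz by (simp add: yN)
  moreover have "\<forall>r\<in>{a..c'}. \<bar>N.ph r\<bar> \<le> S" using S by (simp add: phN)
  moreover have "\<forall>r\<in>{a..c'}. \<bar>N.y r\<bar> \<le> Y" using Y by (simp add: yN)
  ultimately have "N.H c' - N.H a \<le> 2 * N.al * S * Y"
    by (intro N.zone_pos[OF a])
  then show ?thesis by (simp add: HN)
qed

lemma no_sign_change:
  assumes "0 \<le> a" "c' \<le> 1" "\<forall>r\<in>{a<..<c'}. y r \<noteq> 0"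
    and r12: "r1 \<in> {a<..<c'}" "r2 \<in> {a<..<c'}" "y r1 < 0" "y r2 > 0"
  shows False
proof (cases "r1 \<le> r2")
  case True
  have "continuous_on {r1..r2} y" using ycs r12 assms by auto
  from IVT'[of y r1 0 r2, OF _ _ True this] r12
  obtain x where "r1 \<le> x" "x \<le> r2" "y x = 0" by auto
  then show False using assms r12 by auto
next
  case False
  then have le: "r2 \<le> r1" by simp
  have "continuous_on {r2..r1} y" using ycs r12 assms by auto
  from IVT2'[of y r1 0 r2, OF _ _ le this] r12
  obtain x where "r2 \<le> x" "x \<le> r1" "y x = 0" by auto
  then show False using assms r12 by auto
qed

lemma zone:
  assumes a: "0 \<le> a" "a < c'" "c' < 1" and ya: "y a = 0" and yc': "y c' = 0"
    and nz: "\<forall>r\<in>{a<..<c'}. y r \<noteq> 0"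
    and S: "\<forall>r\<in>{a..c'}. \<bar>ph r\<bar> \<le> S" and Y: "\<forall>r\<in>{a..c'}. \<bar>y r\<bar> \<le> Y"
  shows "H c' - H a \<le> 2 * al * S * Y"
proof -
  define m where "m = (a + c')/2"
  have m: "m \<in> {a<..<c'}" using a by (auto simp: m_def)
  show ?thesis
  proof (cases "y m > 0")
    case True
    have "\<forall>r\<in>{a<..<c'}. y r > 0"
    proof
      fix r assume r: "r \<in> {a<..<c'}"
      show "y r > 0"
      proof (rule ccontr)
        assume "\<not> y r > 0"
        then have "y r < 0" using nz r by force
        then show False using no_sign_change[OF a(1) _ nz r m _ True] a by auto
      qed
    qed
    then show ?thesis using zone_pos[OF a ya yc' _ S Y] by blast
  next
    case False
    then have ym: "y m < 0" using nz m by force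
    have "\<forall>r\<in>{a<..<c'}. y r < 0"
    proof
      fix r assume r: "r \<in> {a<..<c'}"
      show "y r < 0"
      proof (rule ccontr)
        assume "\<not> y r < 0"
        then have "y r > 0" using nz r by force
        then show False using no_sign_change[OF a(1) _ nz m r ym] a by auto
      qed
    qed
    then show ?thesis using zone_neg[OF a ya yc' _ S Y] by blast
  qed
qed

lemma Y_bound:
  assumes T: "0 < T" "T < 1" and yT: "y T = 0"
    and c0: "c0 \<in> {0..T}" "\<forall>z\<in>{0..T}. \<bar>y z\<bar> \<le> \<bar>y c0\<bar>"
  shows "(y c0)^2 \<le> H T + ((p+1)*(\<bar>bb\<bar>+1)) powr ka"
proof -
  define C where "C = ((p+1)*(\<bar>bb\<bar>+1)) powr ka"
  have C0: "C \<ge> 0" by (simp add: C_def)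
  have H0: "H T \<ge> 0" using H_nonneg T by auto
  show ?thesis
  proof (cases "y c0 = 0")
    case True
    then show ?thesis using C0 H0 by (simp add: C_def)
  next
    case False
    have c0i: "0 < c0" "c0 < T"
      using False c0(1) y0 yT by (auto simp: order.order_iff_strict)
    then have c01: "c0 \<in> {0<..<1}" using T by auto
    define d where "d = min c0 (T - c0)"
    have d: "d > 0" using c0i by (simp add: d_def)
    have near: "z \<in> {0..T}" if "\<bar>c0 - z\<bar> < d" for z using that c0i by (auto simp: d_def abs_if split: if_splits)
    have "ph c0 / c0 = 0"
    proof (cases "y c0 > 0")
      case True
      show ?thesis
      proof (rule DERIV_local_max[OF y_deriv[OF c01] d], intro allI impI)
        fix z assume "\<bar>c0 - z\<bar> < d"
        then have "\<bar>y z\<bar> \<le> \<bar>y c0\<bar>" using c0(2) near by blast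
        then show "y z \<le> y c0" using True by simp
      qed
    next
      case False
      then have neg: "y c0 < 0" using \<open>y c0 \<noteq> 0\<close> by simp
      show ?thesis
      proof (rule DERIV_local_min[OF y_deriv[OF c01] d], intro allI impI)
        fix z assume "\<bar>c0 - z\<bar> < d"
        then have "\<bar>y z\<bar> \<le> \<bar>y c0\<bar>" using c0(2) near by blast
        then show "y c0 \<le> y z" using neg by simp
      qed
    qed
    then have phc: "ph c0 = 0" using c0i by simp
    have "H c0 \<le> H T" using H_mono[of c0 T] c0i T by auto
    then have hc: "- bb * (y c0)^2 / 2 + \<bar>y c0\<bar> powr (p+1) / (p+1) \<le> H T"
      by (simp add: H_def phc)
    define Y where "Y = \<bar>y c0\<bar>"
    have Ypos: "Y > 0" using False by (simp add: Y_def)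
    define u where "u = Y powr (p-1)"
    have u: "u > 0" using Ypos by (simp add: u_def)
    have py: "Y powr (p+1) = u * Y^2"
    proof -
      have "Y powr (p - 1 + 2) = Y powr (p-1) * Y powr 2" by (rule powr_add)
      then show ?thesis using Ypos by (simp add: u_def power2_eq_square add.commute)
    qed
    have hc2: "u * Y^2 / (p+1) \<le> H T + \<bar>bb\<bar> * Y^2 / 2"
    proof -
      have "- bb * Y^2 / 2 \<ge> - \<bar>bb\<bar> * Y^2 / 2"
        by (simp add: mult_right_mono)
      then show ?thesis using hc py by (simp add: Y_def)
    qed
    have "Y^2 \<le> H T + C"
    proof (cases "u \<ge> (p+1)*(\<bar>bb\<bar>+1)")
      case True
      then have "u * Y^2 / (p+1) \<ge> (p+1)*(\<bar>bb\<bar>+1) * Y^2 / (p+1)"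
        using p1 by (intro divide_right_mono mult_right_mono) auto
      then have "u * Y^2 / (p+1) \<ge> (\<bar>bb\<bar>+1) * Y^2" using p1 by simp
      then have "(\<bar>bb\<bar>+1) * Y^2 \<le> H T + \<bar>bb\<bar> * Y^2 / 2" using hc2 by linarith
      then have "Y^2 + \<bar>bb\<bar> * Y^2 \<le> H T + \<bar>bb\<bar> * Y^2 / 2" by (simp add: algebra_simps)
      moreover have "\<bar>bb\<bar> * Y^2 \<ge> 0" by simp
      ultimately show ?thesis using C0 by linarith
    next
      case False
      then have ux: "u < (p+1)*(\<bar>bb\<bar>+1)" by simp
      have "u powr (1/(p-1)) = Y powr ((p-1) * (1/(p-1)))" by (simp add: u_def powr_powr)
      also have "(p-1) * (1/(p-1)) = 1" using p1 by simp
      finally have "Y = u powr (1/(p-1))" using Ypos by simp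
      also have "... < ((p+1)*(\<bar>bb\<bar>+1)) powr (1/(p-1))"
        by (rule powr_less_mono2) (use ux u p1 in auto)
      finally have "Y < ((p+1)*(\<bar>bb\<bar>+1)) powr (1/(p-1))" .
      then have "Y^2 < (((p+1)*(\<bar>bb\<bar>+1)) powr (1/(p-1)))^2"
        using Ypos by (intro power_strict_mono) auto
      also have "... = C"
      proof -
        have "(((p+1)*(\<bar>bb\<bar>+1)) powr (1/(p-1)))^2 = ((p+1)*(\<bar>bb\<bar>+1)) powr (1/(p-1) + 1/(p-1))"
          unfolding power2_eq_square by (rule powr_add[symmetric])
        also have "1/(p-1) + 1/(p-1) = ka" by (simp add: ka_def)
        finally show ?thesis by (simp add: C_def)
      qed
      finally show ?thesis using H0 by simp
    qed
    then show ?thesis by (simp add: Y_def C_def)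
  qed
qed

lemma ph_sq_bound:
  assumes "0 \<le> r" "r \<le> T" "T < 1"
  shows "(ph r)^2 \<le> 2 * H T + bb * (y r)^2"
proof -
  have "H r \<le> H T" using H_mono assms by auto
  moreover have "\<bar>y r\<bar> powr (p+1) / (p+1) \<ge> 0" using p1 by simp
  moreover have "H r = (ph r)^2/2 - bb*(y r)^2/2 + \<bar>y r\<bar> powr (p+1)/(p+1)" by (simp add: H_def)
  ultimately show ?thesis by linarith
qed

lemma main_est:
  fixes t :: "nat \<Rightarrow> real" and i :: nat
  assumes t0: "t 0 = 0" and tinc: "\<forall>k<i. t k < t (Suc k)" and ti: "t i < 1" and i1: "i \<ge> 1"
    and tz: "\<forall>k. 1 \<le> k \<and> k \<le> i \<longrightarrow> v (t k) = 0"
    and nz: "\<forall>k<i. \<forall>r. t k < r \<and> r < t (Suc k) \<longrightarrow> v r \<noteq> 0"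
  shows "H (t i) \<le> i * al * ((\<bar>bb\<bar>+3) * H (t i) + (\<bar>bb\<bar>+1) * ((p+1)*(\<bar>bb\<bar>+1)) powr ka)"
proof -
  define T where "T = t i"
  have tmono: "t k \<le> t k'" if "k \<le> k'" "k' \<le> i" for k k'
    using that
  proof (induction k' rule: dec_induct)
    case base then show ?case by simp
  next
    case (step n) then show ?case using tinc by (metis Suc_le_lessD order.strict_implies_order order_trans)
  qed
  have trange: "0 \<le> t k \<and> t k \<le> T" if "k \<le> i" for k
    using tmono[of 0 k] tmono[of k i] that t0 by (simp add: T_def)
  have T0: "0 < T" using tinc i1 t0 tmono[of 1 i] by (auto simp: T_def)
  have T1: "T < 1" using ti by (simp add: T_def)
  have ytk: "y (t k) = 0" if "k \<le> i" for k
  proof (cases "k = 0")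
    case True then show ?thesis using t0 y0 by simp
  next
    case False then show ?thesis using tz that by (simp add: y_def)
  qed
  have yT: "y T = 0" using ytk[of i] by (simp add: T_def)
  obtain c0 where c0: "c0 \<in> {0..T}" "\<forall>z\<in>{0..T}. \<bar>y z\<bar> \<le> \<bar>y c0\<bar>"
    using continuous_attains_sup[of "{0..T}" "\<lambda>z. \<bar>y z\<bar>"] continuous_on_rabs[OF ycs[of 0 T]] T0 T1
    by auto
  define Y where "Y = \<bar>y c0\<bar>"
  define H0 where "H0 = H T"
  have H0pos: "H0 \<ge> 0" using H_nonneg T0 T1 by (simp add: H0_def)
  define S where "S = sqrt (2 * H0 + \<bar>bb\<bar> * Y^2)"
  have Yb: "\<forall>r\<in>{0..T}. \<bar>y r\<bar> \<le> Y" using c0 by (simp add: Y_def)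
  have Sb: "\<forall>r\<in>{0..T}. \<bar>ph r\<bar> \<le> S"
  proof
    fix r assume r: "r \<in> {0..T}"
    have "(ph r)^2 \<le> 2 * H0 + bb * (y r)^2" using ph_sq_bound[of r T] r T1 by (simp add: H0_def)
    also have "bb * (y r)^2 \<le> \<bar>bb\<bar> * Y^2"
    proof -
      have "(y r)^2 \<le> Y^2" using Yb r by (metis abs_ge_zero power2_abs power_mono)
      then have "\<bar>bb\<bar> * (y r)^2 \<le> \<bar>bb\<bar> * Y^2" by (simp add: mult_left_mono)
      moreover have "bb * (y r)^2 \<le> \<bar>bb\<bar> * (y r)^2" by (simp add: mult_right_mono)
      ultimately show ?thesis by linarith
    qed
    finally have "(ph r)^2 \<le> 2 * H0 + \<bar>bb\<bar> * Y^2" by simp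
    then have "sqrt ((ph r)^2) \<le> S" unfolding S_def by (rule real_sqrt_le_mono)
    then show "\<bar>ph r\<bar> \<le> S" by simp
  qed
  have zstep: "H (t (Suc k)) - H (t k) \<le> 2 * al * S * Y" if k: "k < i" for k
  proof (rule zone)
    show "0 \<le> t k" "t k < t (Suc k)" "t (Suc k) < 1" using trange[of k] tinc k T1 trange[of "Suc k"] by auto
    show "y (t k) = 0" "y (t (Suc k)) = 0" using ytk k by auto
    show "\<forall>r\<in>{t k<..<t (Suc k)}. y r \<noteq> 0"
    proof
      fix r assume r: "r \<in> {t k<..<t (Suc k)}"
      then have "r > 0" using trange[of k] k by auto
      then show "y r \<noteq> 0" using nz k r by (simp add: y_def)
    qed
    show "\<forall>r\<in>{t k..t (Suc k)}. \<bar>ph r\<bar> \<le> S" using Sb trange[of k] trange[of "Suc k"] k by auto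
    show "\<forall>r\<in>{t k..t (Suc k)}. \<bar>y r\<bar> \<le> Y" using Yb trange[of k] trange[of "Suc k"] k by auto
  qed
  have tele: "H (t k) \<le> k * (2 * al * S * Y)" if "k \<le> i" for k
    using that
  proof (induction k)
    case 0 then show ?case using t0 H0 by simp
  next
    case (Suc k)
    then have "H (t k) \<le> k * (2 * al * S * Y)" by simp
    moreover have "H (t (Suc k)) - H (t k) \<le> 2 * al * S * Y" using zstep Suc by simp
    ultimately show ?case by (simp add: algebra_simps)
  qed
  have HS: "H0 \<le> i * (2 * al * S * Y)" using tele[of i] by (simp add: H0_def T_def)
  have S2: "S^2 = 2 * H0 + \<bar>bb\<bar> * Y^2" unfolding S_def using H0pos by simp
  have "2 * S * Y \<le> S^2 + Y^2" by (simp add: sum_squares_bound)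
  then have "(i * al) * (2 * S * Y) \<le> (i * al) * (S^2 + Y^2)"
    using al_pos by (intro mult_left_mono) auto
  then have "i * (2 * al * S * Y) \<le> i * al * (S^2 + Y^2)" by (simp add: algebra_simps)
  also have "... = i * al * (2 * H0 + (\<bar>bb\<bar> + 1) * Y^2)" by (simp add: S2 algebra_simps)
  also have "... \<le> i * al * (2 * H0 + (\<bar>bb\<bar> + 1) * (H0 + ((p+1)*(\<bar>bb\<bar>+1)) powr ka))"
  proof -
    have "Y^2 \<le> H0 + ((p+1)*(\<bar>bb\<bar>+1)) powr ka"
      using Y_bound[OF T0 T1 yT c0] by (simp add: Y_def H0_def)
    then show ?thesis using al_pos
      by (intro mult_left_mono add_left_mono) auto
  qed
  also have "... = i * al * ((\<bar>bb\<bar>+3) * H0 + (\<bar>bb\<bar>+1) * ((p+1)*(\<bar>bb\<bar>+1)) powr ka)"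
    by (simp add: algebra_simps)
  finally show ?thesis using HS by (simp add: H0_def T_def)
qed

lemma gronwall:
  fixes k :: nat
  assumes r: "0 < r" "r \<le> T" "T < 1" and yT: "y T = 0" and k: "real k \<ge> \<bar>bb\<bar> + 2"
  shows "(y r)^2 \<le> 2 * H T * (T / r)^k"
proof -
  define B where "B = \<bar>bb\<bar> + 1"
  have B1: "B \<ge> 1" by (simp add: B_def)
  have HT: "H T \<ge> 0" using H_nonneg r by auto
  define F where "F = (\<lambda>x. (B * (y x)^2 + 2 * H T) * x^k)"
  have "F r \<le> F T"
  proof (rule DERIV_nonneg_imp_increasing_open[OF r(2)])
    fix x assume x: "r < x" "x < T"
    then have x01: "x \<in> {0<..<1}" using r by auto
    have D: "(F has_real_derivative (B * (of_nat 2 * (ph x / x * y x ^ (2 - Suc 0))) + 0) * x^k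
         + real k * x ^ (k - Suc 0) * (B * (y x)^2 + 2 * H T)) (at x)"
      unfolding F_def
      by (rule DERIV_mult[OF DERIV_add[OF DERIV_cmult[OF DERIV_power[OF y_deriv[OF x01]]] DERIV_const] DERIV_pow])
    have "real k \<ge> 2" using k by (smt (verit) abs_ge_zero)
    then have k1: "k \<ge> 1" by simp
    have xk: "x^k = x * x^(k - Suc 0)" using k1 by (cases k) auto
    have eq: "(B * (of_nat 2 * (ph x / x * y x ^ (2 - Suc 0))) + 0) * x^k
         + real k * x ^ (k - Suc 0) * (B * (y x)^2 + 2 * H T)
         = x ^ (k - Suc 0) * (2 * B * y x * ph x + real k * (B * (y x)^2 + 2 * H T))"
    proof -
      have e1: "ph x / x * x = ph x" using x01 by simp
      have "(B * (of_nat 2 * (ph x / x * y x ^ (2 - Suc 0))) + 0) * x^k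
          = (2 * B) * (ph x / x * x) * y x * x ^ (k - Suc 0)"
        unfolding xk by (simp add: algebra_simps)
      also have "... = x ^ (k - Suc 0) * (2 * B * y x * ph x)" unfolding e1 by (simp add: algebra_simps)
      finally show ?thesis by (simp add: algebra_simps)
    qed
    have a1: "- ((y x)^2 + (ph x)^2) \<le> 2 * y x * ph x"
    proof -
      have "0 \<le> (y x + ph x)^2" by simp
      then show ?thesis unfolding power2_sum by linarith
    qed
    have a2: "(ph x)^2 \<le> 2 * H T + B * (y x)^2"
    proof -
      have "(ph x)^2 \<le> 2 * H T + bb * (y x)^2" using ph_sq_bound[of x T] x r by auto
      moreover have "bb * (y x)^2 \<le> B * (y x)^2" unfolding B_def by (intro mult_right_mono) auto
      ultimately show ?thesis by linarith
    qed
    have b1: "B * (- ((y x)^2 + (ph x)^2)) \<le> B * (2 * y x * ph x)"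
      using a1 B1 by (intro mult_left_mono) auto
    have b2: "B * (ph x)^2 \<le> B * (2 * H T + B * (y x)^2)"
      using a2 B1 by (intro mult_left_mono) auto
    have Z0: "B * (y x)^2 + 2 * H T \<ge> 0" using B1 HT by simp
    have b3: "(B + 1) * (B * (y x)^2 + 2 * H T) \<le> real k * (B * (y x)^2 + 2 * H T)"
      using k Z0 unfolding B_def by (intro mult_right_mono) auto
    have "2 * B * y x * ph x + real k * (B * (y x)^2 + 2 * H T) \<ge> 0"
      using b1 b2 b3 HT B1 by (simp add: algebra_simps)
    moreover have "x ^ (k - Suc 0) \<ge> 0" using x01 by simp
    ultimately have "0 \<le> x ^ (k - Suc 0) * (2 * B * y x * ph x + real k * (B * (y x)^2 + 2 * H T))"
      by simp
    then show "\<exists>z. (F has_real_derivative z) (at x) \<and> 0 \<le> z"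
      using D eq by auto
  next
    have "continuous_on {r..T} y" using ycs r by auto
    then show "continuous_on {r..T} F" unfolding F_def
      by (intro continuous_on_mult continuous_on_add continuous_on_power continuous_on_const continuous_on_id)
  qed
  then have "(B * (y r)^2 + 2 * H T) * r^k \<le> 2 * H T * T^k" by (simp add: F_def yT)
  then have "B * (y r)^2 + 2 * H T \<le> 2 * H T * T^k / r^k" using r by (simp add: field_simps)
  moreover have "(y r)^2 \<le> B * (y r)^2" using B1 by (simp add: mult_le_cancel_right1)
  ultimately show ?thesis using HT by (simp add: power_divide)
qed

lemma per_solution:
  fixes t :: "nat \<Rightarrow> real" and i k :: nat
  assumes t0: "t 0 = 0" and tinc: "\<forall>k<i. t k < t (Suc k)" and ti: "t i < 1" and i1: "i \<ge> 1"
    and tz: "\<forall>k. 1 \<le> k \<and> k \<le> i \<longrightarrow> v (t k) = 0"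
    and nz: "\<forall>k<i. \<forall>r. t k < r \<and> r < t (Suc k) \<longrightarrow> v r \<noteq> 0"
    and \<delta>: "0 < \<delta>" "\<delta> < 1" and k: "real k \<ge> \<bar>bb\<bar> + 2"
  shows "\<exists>h\<ge>0. h \<le> i * al * ((\<bar>bb\<bar>+3) * h + (\<bar>bb\<bar>+1) * ((p+1)*(\<bar>bb\<bar>+1)) powr ka) \<and>
     (\<forall>s\<in>{1-\<delta>..1}. (t i powr ka * v (t i * s))^2 \<le> 2 * h / ((1-\<delta>)^k * (1-\<delta>) powr (2*ka)))"
proof -
  define T where "T = t i"
  have tmono: "t k \<le> t k'" if "k \<le> k'" "k' \<le> i" for k k'
    using that
  proof (induction k' rule: dec_induct)
    case base then show ?case by simp
  next
    case (step n) then show ?case using tinc by (metis Suc_le_lessD order.strict_implies_order order_trans)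
  qed
  have T0: "0 < T" using tinc i1 t0 tmono[of 1 i] by (auto simp: T_def)
  have T1: "T < 1" using ti by (simp add: T_def)
  have yT: "y T = 0" using tz i1 by (simp add: y_def T_def)
  have HT: "H T \<ge> 0" using H_nonneg T0 T1 by auto
  have bound: "(T powr ka * v (T * s))^2 \<le> 2 * H T / ((1-\<delta>)^k * (1-\<delta>) powr (2*ka))"
    if s: "s \<in> {1-\<delta>..1}" for s
  proof -
    have s0: "s > 0" using s \<delta> by auto
    have r: "0 < T * s" "T * s \<le> T" using s0 s T0 by (auto simp: mult_le_cancel_left1)
    have g: "(y (T * s))^2 \<le> 2 * H T * (T / (T * s))^k" by (rule gronwall[OF r T1 yT k])
    have TS: "T / (T * s) = 1 / s" using T0 by simp
    have ys: "y (T * s) = s powr ka * (T powr ka * v (T * s))"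
      using T0 s0 by (simp add: y_def powr_mult)
    have sk: "(s powr ka)^2 = s powr (2*ka)"
      unfolding power2_eq_square by (simp add: powr_add[symmetric])
    have "(s powr (2*ka)) * (T powr ka * v (T * s))^2 \<le> 2 * H T / s^k"
      using g unfolding ys TS by (simp add: power_mult_distrib sk power_divide)
    then have A: "(T powr ka * v (T * s))^2 \<le> 2 * H T / (s^k * s powr (2*ka))"
      using s0 by (simp add: field_simps)
    have "(1-\<delta>)^k * (1-\<delta>) powr (2*ka) \<le> s^k * s powr (2*ka)"
      using s \<delta> ka_pos by (intro mult_mono power_mono powr_mono2) auto
    moreover have "(1-\<delta>)^k * (1-\<delta>) powr (2*ka) > 0" using \<delta> by simp
    ultimately have "2 * H T / (s^k * s powr (2*ka)) \<le> 2 * H T / ((1-\<delta>)^k * (1-\<delta>) powr (2*ka))"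
      using HT by (intro divide_left_mono) auto
    then show ?thesis using A by linarith
  qed
  have "H T \<le> i * al * ((\<bar>bb\<bar>+3) * H T + (\<bar>bb\<bar>+1) * ((p+1)*(\<bar>bb\<bar>+1)) powr ka)"
    using main_est[OF t0 tinc ti i1 tz nz] by (simp add: T_def)
  then show ?thesis using HT bound by (intro exI[of _ "H T"]) (auto simp: T_def)
qed

end

lemma zeros_struct:
  fixes u :: "real \<Rightarrow> real"
  assumes fin: "finite (zeros01 u)" and cd: "card (zeros01 u) = m" and u1: "u 1 = 0"
    and i: "1 \<le> i" "i < m"
  shows "tz u 0 = 0" "\<forall>k<i. tz u k < tz u (Suc k)" "tz u i < 1"
    "\<forall>k. 1 \<le> k \<and> k \<le> i \<longrightarrow> u (tz u k) = 0"
    "\<forall>k<i. \<forall>r. tz u k < r \<and> r < tz u (Suc k) \<longrightarrow> u r \<noteq> 0"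
proof -
  define A where "A = insert 0 (zeros01 u)"
  define L where "L = sorted_list_of_set A"
  have tzL: "tz u k = L ! k" for k by (simp add: tz_def L_def A_def)
  have finA: "finite A" using fin by (simp add: A_def)
  have n0: "0 \<notin> zeros01 u" by (simp add: zeros01_def)
  have len: "length L = Suc m" using finA n0 cd by (simp add: L_def A_def length_sorted_list_of_set)
  have setL: "set L = A" using finA by (simp add: L_def set_sorted_list_of_set)
  have strict: "sorted_wrt (<) L" by (simp add: L_def strict_sorted_list_of_set)
  have sorted: "sorted L" by (simp add: L_def sorted_sorted_list_of_set)
  have Arange: "x \<in> A \<Longrightarrow> 0 \<le> x \<and> x \<le> 1" for x by (auto simp: A_def zeros01_def)
  have inA: "L ! k \<in> A" if "k \<le> m" for k using that len setL nth_mem[of k L] by auto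
  have lt: "L ! k < L ! k'" if "k < k'" "k' \<le> m" for k k'
    using sorted_wrt_nth_less[OF strict that(1)] that len by auto
  have L0: "L ! 0 = 0"
  proof -
    have "0 \<in> set L" using setL by (simp add: A_def)
    then obtain j where j: "j < length L" "L ! j = 0" by (auto simp: in_set_conv_nth)
    have "L ! 0 \<le> L ! j" using sorted_nth_mono[OF sorted _ j(1)] by simp
    moreover have "L ! 0 \<ge> 0" using Arange inA[of 0] by auto
    ultimately show ?thesis using j by simp
  qed
  have Lz: "L ! k \<in> zeros01 u" if "1 \<le> k" "k \<le> m" for k
  proof -
    have "L ! k > 0" using lt[of 0 k] that L0 by simp
    then show ?thesis using inA[of k] that by (auto simp: A_def)
  qed
  show "tz u 0 = 0" using L0 by (simp add: tzL)
  show "\<forall>k<i. tz u k < tz u (Suc k)" using lt i by (simp add: tzL)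
  show "tz u i < 1"
  proof -
    have "L ! i < L ! m" using lt i by simp
    moreover have "L ! m \<le> 1" using Lz[of m] i by (auto simp: zeros01_def)
    ultimately show ?thesis by (simp add: tzL)
  qed
  show "\<forall>k. 1 \<le> k \<and> k \<le> i \<longrightarrow> u (tz u k) = 0"
    using Lz i by (auto simp: tzL zeros01_def)
  show "\<forall>k<i. \<forall>r. tz u k < r \<and> r < tz u (Suc k) \<longrightarrow> u r \<noteq> 0"
  proof (intro allI impI notI)
    fix k r assume k: "k < i" and r: "tz u k < r \<and> r < tz u (Suc k)" and ur: "u r = 0"
    have "L ! k \<ge> 0" using Arange inA[of k] k i by auto
    moreover have "L ! (Suc k) \<le> 1" using Arange inA[of "Suc k"] k i by auto
    ultimately have "r \<in> zeros01 u" using r ur by (auto simp: tzL zeros01_def)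
    then have "r \<in> set L" using setL by (simp add: A_def)
    then obtain j where j: "j < length L" "L ! j = r" by (auto simp: in_set_conv_nth)
    show False
    proof (cases "j \<le> k")
      case True
      then have "L ! j \<le> L ! k" using sorted_nth_mono[OF sorted True] k i len by simp
      then show False using r j by (simp add: tzL)
    next
      case False
      then have "Suc k \<le> j" by simp
      then have "L ! (Suc k) \<le> L ! j" using sorted_nth_mono[OF sorted _ j(1)] by simp
      then show False using r j by (simp add: tzL)
    qed
  qed
qed

definition "kaf (q::real) = 2/(q-1)"
definition "alf (M::real) q = 2 * kaf q + 2 - M"
definition "bbf (M::real) q = kaf q * (M - 2 - kaf q)"
definition "Cf (M::real) q = ((q+1)*(\<bar>bbf M q\<bar>+1)) powr kaf q"

lemma key:
  fixes u :: "real \<Rightarrow> real" and k i m :: nat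
  assumes M: "M > 2" and q: "1 < q" "q < (M+2)/(M-2)" and rs: "radial_sol M q u"
    and nzn: "nodal_zones u m" and i: "1 \<le> i" "i < m" and \<delta>: "0 < \<delta>" "\<delta> < 1"
    and k: "real k \<ge> \<bar>bbf M q\<bar> + 2"
  shows "\<exists>h\<ge>0. h \<le> i * alf M q * ((\<bar>bbf M q\<bar>+3) * h + (\<bar>bbf M q\<bar>+1) * Cf M q) \<and>
     (\<forall>s\<in>{1-\<delta>..1}. (wres q u i s)^2 \<le> 2 * h / ((1-\<delta>)^k * (1-\<delta>) powr (2 * kaf q)))"
proof -
  obtain u' where u': "\<forall>t\<in>{0..1}. (u has_real_derivative u' t) (at t within {0..1})"
     "u 1 = 0"
     "\<forall>t\<in>{0<..<1}. ((\<lambda>s. s powr (M - 1) * u' s) has_real_derivative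
               - (t powr (M - 1) * (\<bar>u t\<bar> powr (q - 1) * u t))) (at t)"
    using rs unfolding radial_sol_def by blast
  interpret R: rsol M q u u' using M q u' by unfold_locales auto
  have kaR: "R.ka = kaf q" unfolding R.ka_def kaf_def ..
  have alR: "R.al = alf M q" unfolding R.al_def alf_def kaR ..
  have bbR: "R.bb = bbf M q" unfolding R.bb_def bbf_def kaR ..
  have fin: "finite (zeros01 u)" "card (zeros01 u) = m" using nzn by (auto simp: nodal_zones_def)
  note zs = zeros_struct[OF fin u'(2) i]
  have k': "real k \<ge> \<bar>R.bb\<bar> + 2" using k unfolding bbR .
  from R.per_solution[OF zs(1,2,3) i(1) zs(4,5) \<delta> k']
  show ?thesis unfolding kaR alR bbR Cf_def wres_def kaf_def by simp
qed

theorem lemma2p10: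
  fixes M :: real and m i :: nat and v :: "real \<Rightarrow> real \<Rightarrow> real" and p :: "nat \<Rightarrow> real"
  assumes "M > 2"
    and "m \<ge> 2"
    and sol: "\<forall>q\<in>{1<..<(M + 2) / (M - 2)}.
                radial_sol M q (v q) \<and> nodal_zones (v q) m \<and> v q 0 > 0"
    and "1 \<le> i" and "i \<le> m - 1"
    and "\<forall>n. p n \<in> {1<..<(M + 2) / (M - 2)}"
    and "p \<longlonglongrightarrow> (M + 2) / (M - 2)"
    and "(\<lambda>n. crit (v (p n)) (i - 1) / tz (v (p n)) i) \<longlonglongrightarrow> 0"
    and "filterlim (\<lambda>n. tz (v (p n)) i * Mtil (p n) (v (p n)) (i - 1)) at_top sequentially"
  shows "\<forall>\<delta>. 0 < \<delta> \<and> \<delta> < 1 \<longrightarrow>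
           uniform_limit {1 - \<delta>..1} (\<lambda>n r. wres (p n) (v (p n)) i r) (\<lambda>r. 0) sequentially"
proof (intro allI impI)
  fix \<delta> :: real assume \<delta>: "0 < \<delta> \<and> \<delta> < 1"
  have M2: "M > 2" using assms(1) .
  define pM where "pM = (M+2)/(M-2)"
  have pMm: "pM - 1 = 4/(M-2)" using M2 by (simp add: pM_def field_simps)
  have pM1: "pM - 1 \<noteq> 0" using M2 pMm by simp
  have "4/(M-2) > 0" using M2 by simp
  then have pMpos: "pM > 1" using pMm by linarith
  have plim: "p \<longlonglongrightarrow> pM" using assms(7) by (simp add: pM_def)
  have im: "i < m" using assms(2,5) by linarith
  define kaL where "kaL = kaf pM"
  have kaL: "2 * kaL + 2 - M = 0" using M2 by (simp add: kaL_def kaf_def pMm field_simps)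
  have lim_ka: "(\<lambda>n. kaf (p n)) \<longlonglongrightarrow> kaL"
    unfolding kaf_def kaL_def by (intro tendsto_intros plim pM1)
  have lim_al: "(\<lambda>n. alf M (p n)) \<longlonglongrightarrow> 0"
  proof -
    have "(\<lambda>n. alf M (p n)) \<longlonglongrightarrow> 2 * kaL + 2 - M"
      unfolding alf_def by (intro tendsto_intros lim_ka)
    then show ?thesis using kaL by simp
  qed
  define bL where "bL = bbf M pM"
  have lim_bb: "(\<lambda>n. bbf M (p n)) \<longlonglongrightarrow> bL"
    unfolding bbf_def bL_def kaL_def[symmetric] by (intro tendsto_intros lim_ka)
  define CL where "CL = ((pM+1)*(\<bar>bL\<bar>+1)) powr kaL"
  have lim_C: "(\<lambda>n. Cf M (p n)) \<longlonglongrightarrow> CL"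
    unfolding Cf_def CL_def
  proof (rule tendsto_powr)
    show "(\<lambda>n. (p n + 1) * (\<bar>bbf M (p n)\<bar> + 1)) \<longlonglongrightarrow> (pM + 1) * (\<bar>bL\<bar> + 1)"
      by (intro tendsto_intros plim lim_bb)
    show "(\<lambda>n. kaf (p n)) \<longlonglongrightarrow> kaL" by (rule lim_ka)
    show "(pM + 1) * (\<bar>bL\<bar> + 1) \<noteq> 0" using pMpos by (smt (verit) mult_pos_pos abs_ge_zero)
  qed
  define k0 where "k0 = nat \<lceil>\<bar>bL\<bar> + 3\<rceil>"
  have k0: "real k0 \<ge> \<bar>bL\<bar> + 3" unfolding k0_def by linarith
  define dd where "dd = 1 - \<delta>"
  have dd: "0 < dd" "dd < 1" using \<delta> by (auto simp: dd_def)
  define den where "den = (\<lambda>n. dd^k0 * dd powr (2 * kaf (p n)))"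
  have den_pos: "den n > 0" for n using dd by (simp add: den_def)
  define denL where "denL = dd^k0 * dd powr (2 * kaL)"
  have denL: "denL > 0" using dd by (simp add: denL_def)
  have lim_den: "den \<longlonglongrightarrow> denL"
    unfolding den_def denL_def
    by (intro tendsto_intros lim_ka) (use dd in auto)
  define Q where "Q = (\<lambda>n. 4 * i * alf M (p n) * (\<bar>bbf M (p n)\<bar> + 1) * Cf M (p n) / den n)"
  have lim_Q: "Q \<longlonglongrightarrow> 0"
  proof -
    have lim4: "(\<lambda>n. 4 * real i * alf M (p n)) \<longlonglongrightarrow> 0"
      using tendsto_mult[OF tendsto_const lim_al, of "4 * real i"] by simp
    have "Q \<longlonglongrightarrow> 0 * (\<bar>bL\<bar> + 1) * CL / denL"
      unfolding Q_def by (intro tendsto_intros lim4 lim_bb lim_C lim_den) (use denL lim4 in auto)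
    then show ?thesis by simp
  qed
  define E where "E = (\<lambda>n. i * alf M (p n) * (\<bar>bbf M (p n)\<bar> + 3))"
  have lim_E: "E \<longlonglongrightarrow> 0"
  proof -
    have lim1: "(\<lambda>n. real i * alf M (p n)) \<longlonglongrightarrow> 0"
      using tendsto_mult[OF tendsto_const lim_al, of "real i"] by simp
    have "E \<longlonglongrightarrow> 0 * (\<bar>bL\<bar> + 3)"
      unfolding E_def by (intro tendsto_intros lim1 lim_bb)
    then show ?thesis by simp
  qed
  have ev_bb: "\<forall>\<^sub>F n in sequentially. \<bar>bbf M (p n)\<bar> < \<bar>bL\<bar> + 1"
    using order_tendstoD(2)[OF tendsto_rabs[OF lim_bb], of "\<bar>bL\<bar> + 1"] by simp
  have ev_E: "\<forall>\<^sub>F n in sequentially. E n < 1/2"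
    using order_tendstoD(2)[OF lim_E, of "1/2"] by simp
  show "uniform_limit {1 - \<delta>..1} (\<lambda>n r. wres (p n) (v (p n)) i r) (\<lambda>r. 0) sequentially"
    unfolding uniform_limit_iff
  proof (intro allI impI)
    fix \<epsilon> :: real assume \<epsilon>: "\<epsilon> > 0"
    have ev_Q: "\<forall>\<^sub>F n in sequentially. Q n < \<epsilon>^2"
      using order_tendstoD(2)[OF lim_Q, of "\<epsilon>^2"] \<epsilon> by simp
    from ev_bb ev_E ev_Q
    show "\<forall>\<^sub>F n in sequentially. \<forall>x\<in>{1 - \<delta>..1}. dist (wres (p n) (v (p n)) i x) 0 < \<epsilon>"
    proof eventually_elim
      case (elim n)
      define q where "q = p n"
      have q: "1 < q" "q < (M+2)/(M-2)" using assms(6) by (auto simp: q_def)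
      have rs: "radial_sol M q (v q)" "nodal_zones (v q) m" using sol q by auto
      have kq: "real k0 \<ge> \<bar>bbf M q\<bar> + 2" using elim(1) k0 by (simp add: q_def)
      obtain h where h: "h \<ge> 0" "h \<le> i * alf M q * ((\<bar>bbf M q\<bar>+3) * h + (\<bar>bbf M q\<bar>+1) * Cf M q)"
        "\<forall>s\<in>{1-\<delta>..1}. (wres q (v q) i s)^2 \<le> 2 * h / ((1-\<delta>)^k0 * (1-\<delta>) powr (2 * kaf q))"
        using key[OF M2 q rs(1) rs(2) assms(4) im] \<delta> kq by blast
      have alq: "alf M q > 0"
      proof -
        have "q - 1 < 4/(M-2)" using q M2 by (simp add: field_simps)
        then have "4/(q-1) > M - 2" using q M2 by (simp add: field_simps)
        then show ?thesis by (simp add: alf_def kaf_def)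
      qed
      have Cq: "Cf M q \<ge> 0" by (simp add: Cf_def)
      define R where "R = i * alf M q * (\<bar>bbf M q\<bar>+1) * Cf M q"
      have R0: "R \<ge> 0" using alq Cq by (simp add: R_def)
      have "h \<le> E n * h + R" using h(2) by (simp add: E_def R_def q_def algebra_simps)
      moreover have "E n * h \<le> (1/2) * h" using elim(2) h(1) by (intro mult_right_mono) auto
      ultimately have hR: "h \<le> 2 * R" by linarith
      show ?case
      proof
        fix s assume s: "s \<in> {1 - \<delta>..1}"
        have "(wres q (v q) i s)^2 \<le> 2 * h / den n" using h(3) s by (simp add: den_def dd_def q_def)
        also have "... \<le> 4 * R / den n" using hR den_pos[of n] by (intro divide_right_mono) auto
        also have "... = Q n" by (simp add: Q_def R_def q_def)
        also have "... < \<epsilon>^2" using elim(3) .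
        finally have A: "\<bar>wres q (v q) i s\<bar>^2 < \<epsilon>^2" by simp
        have "\<bar>wres q (v q) i s\<bar> < \<epsilon>" by (rule power2_less_imp_less[OF A]) (use \<epsilon> in simp)
        then show "dist (wres (p n) (v (p n)) i s) 0 < \<epsilon>" by (simp add: q_def dist_real_def)
      qed
    qed
  qed
qed

end
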